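(* Let $K_n$, $C_n$ and $W_n$ be, respectively, the complete graph, the cycle and the wheel on $n\geq 3$ vertices. Then for every integer $k$ with $3\leq k\leq n$, $px_k(K_n)=px_k(C_n)=px_k(W_n)=2$.
   Context: All graphs are finite, simple, undirected and connected. An edge-coloring of a graph assigns a color to each edge (adjacent edges may receive the same color). A tree in an edge-colored graph is proper if any two adjacent edges of the tree receive different colors. For $S\subseteq V(G)$, an $S$-tree is a subgraph of $G$ that is a tree containing all vertices of $S$. For a connected graph $G$ of order $n$ and an integer $k$ with $2\le k\le n$, an edge-coloring of $G$ is a $k$-proper coloring if for every set $S$ of $k$ vertices of $G$ there exists a proper $S$-tree in $G$. The $k$-proper index $px_k(G)$ is the minimum number of colors used in a $k$-proper coloring of $G$. The wheel $W_n$ on $n$ vertices consists of a cycle on $n-1$ vertices together with one additional vertex adjacent to all vertices of that cycle. *)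

theory Defs
  imports Main
begin

definition adj :: "'a set set \<Rightarrow> 'a \<Rightarrow> 'a \<Rightarrow> bool" where
  "adj E u v \<longleftrightarrow> {u, v} \<in> E \<and> u \<noteq> v"

definition simple_graph :: "'a set \<Rightarrow> 'a set set \<Rightarrow> bool" where
  "simple_graph V E \<longleftrightarrow> finite V \<and> (\<forall>e\<in>E. \<exists>u v. u \<in> V \<and> v \<in> V \<and> u \<noteq> v \<and> e = {u, v})"

definition connected_graph :: "'a set \<Rightarrow> 'a set set \<Rightarrow> bool" where
  "connected_graph V E \<longleftrightarrow> V \<noteq> {} \<and> (\<forall>u\<in>V. \<forall>v\<in>V. (adj E)\<^sup>*\<^sup>* u v)"

definition has_cycle :: "'a set \<Rightarrow> 'a set set \<Rightarrow> bool" where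
  "has_cycle V E \<longleftrightarrow> (\<exists>xs. length xs \<ge> 3 \<and> distinct xs \<and> set xs \<subseteq> V \<and>
      (\<forall>i < length xs. {xs ! i, xs ! ((i + 1) mod length xs)} \<in> E))"

definition is_tree :: "'a set \<Rightarrow> 'a set set \<Rightarrow> bool" where
  "is_tree V E \<longleftrightarrow> simple_graph V E \<and> connected_graph V E \<and> \<not> has_cycle V E"

definition subgraph :: "'a set \<Rightarrow> 'a set set \<Rightarrow> 'a set \<Rightarrow> 'a set set \<Rightarrow> bool" where
  "subgraph H F V E \<longleftrightarrow> H \<subseteq> V \<and> F \<subseteq> E \<and> (\<forall>e\<in>F. e \<subseteq> H)"

definition proper_edges :: "('a set \<Rightarrow> nat) \<Rightarrow> 'a set set \<Rightarrow> bool" where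
  "proper_edges c F \<longleftrightarrow> (\<forall>e\<in>F. \<forall>f\<in>F. e \<noteq> f \<and> e \<inter> f \<noteq> {} \<longrightarrow> c e \<noteq> c f)"

definition proper_S_tree ::
  "'a set \<Rightarrow> 'a set set \<Rightarrow> ('a set \<Rightarrow> nat) \<Rightarrow> 'a set \<Rightarrow> bool" where
  "proper_S_tree V E c S \<longleftrightarrow> (\<exists>H F. subgraph H F V E \<and> is_tree H F \<and> S \<subseteq> H \<and> proper_edges c F)"

definition k_proper_coloring :: "nat \<Rightarrow> 'a set \<Rightarrow> 'a set set \<Rightarrow> ('a set \<Rightarrow> nat) \<Rightarrow> bool" where
  "k_proper_coloring k V E c \<longleftrightarrow> (\<forall>S. S \<subseteq> V \<and> card S = k \<longrightarrow> proper_S_tree V E c S)"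

definition px :: "nat \<Rightarrow> 'a set \<Rightarrow> 'a set set \<Rightarrow> nat" where
  "px k V E = (LEAST m. \<exists>c. k_proper_coloring k V E c \<and> card (c ` E) = m)"

definition complete_graph :: "nat \<Rightarrow> nat set set" where
  "complete_graph n = {{i, j} | i j. i < n \<and> j < n \<and> i \<noteq> j}"

definition cycle_graph :: "nat \<Rightarrow> nat set set" where
  "cycle_graph n = {{i, (i + 1) mod n} | i. i < n}"

definition wheel_graph :: "nat \<Rightarrow> nat set set" where
  "wheel_graph n = cycle_graph (n - 1) \<union> {{i, n - 1} | i. i < n - 1}"

end

theory Submission
  imports Defs
begin

definition pathE :: "nat \<Rightarrow> nat set set" where
  "pathE n = {{i, Suc i} | i. Suc i < n}"

lemma reach:
  assumes disj: "\<forall>e\<in>F. \<forall>f\<in>F. e \<noteq> f \<longrightarrow> e \<inter> f = {}"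
    and r: "(adj F)\<^sup>*\<^sup>* a v"
  shows "v = a \<or> {a, v} \<in> F"
  using r
proof induction
  case base
  then show ?case by simp
next
  case (step v w)
  then have vw: "{v, w} \<in> F" "v \<noteq> w" by (auto simp: adj_def)
  show ?case
  proof (cases "v = a")
    case True then show ?thesis using vw by simp
  next
    case False
    with step have av: "{a, v} \<in> F" by simp
    have "{a, v} = {v, w}" using disj[rule_format, OF av vw(1)] by auto
    then have "w = a" using vw by (auto simp: doubleton_eq_iff)
    then show ?thesis by simp
  qed
qed

lemma three:
  assumes "is_tree H F" "a \<in> H" "b \<in> H" "d \<in> H" "a \<noteq> b" "a \<noteq> d" "b \<noteq> d"
  shows "\<exists>e\<in>F. \<exists>f\<in>F. e \<noteq> f \<and> e \<inter> f \<noteq> {}"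
proof (rule ccontr)
  assume "\<not> ?thesis"
  then have disj: "\<forall>e\<in>F. \<forall>f\<in>F. e \<noteq> f \<longrightarrow> e \<inter> f = {}" by blast
  have c: "connected_graph H F" using assms(1) by (simp add: is_tree_def)
  have "(adj F)\<^sup>*\<^sup>* a b" "(adj F)\<^sup>*\<^sup>* a d" using c assms by (auto simp: connected_graph_def)
  then have F1: "{a, b} \<in> F" and F2: "{a, d} \<in> F"
    using reach[OF disj] assms(5,6) by (metis, metis)
  have ne: "{a, b} \<noteq> {a, d}" using assms(7) by (auto simp: doubleton_eq_iff)
  have "{a, b} \<inter> {a, d} = {}" using disj[rule_format, OF F1 F2 ne] .
  then show False by simp
qed

lemma lower:
  assumes "k_proper_coloring k {0..<n} E c" "finite E" "3 \<le> k" "k \<le> n"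
  shows "2 \<le> card (c ` E)"
proof -
  have "proper_S_tree {0..<n} E c {0..<k}" using assms(1,4)
    by (auto simp: k_proper_coloring_def)
  then obtain H F where HF: "subgraph H F {0..<n} E" "is_tree H F" "{0..<k} \<subseteq> H" "proper_edges c F"
    by (auto simp: proper_S_tree_def)
  have "0 \<in> H" "1 \<in> H" "2 \<in> H" using HF(3) assms(3) by auto
  then obtain e f where ef: "e \<in> F" "f \<in> F" "e \<noteq> f" "e \<inter> f \<noteq> {}"
    using three[OF HF(2)] by fastforce
  then have "c e \<noteq> c f" using HF(4) by (auto simp: proper_edges_def)
  moreover have "e \<in> E" "f \<in> E" using HF(1) ef by (auto simp: subgraph_def)
  ultimately have "{c e, c f} \<subseteq> c ` E" "card {c e, c f} = 2" by auto
  then show ?thesis using assms(2) by (metis card_mono finite_imageI)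
qed

lemma path_edge: "{x, y} \<in> pathE n \<Longrightarrow> x = Suc y \<or> y = Suc x"
  by (auto simp: pathE_def doubleton_eq_iff)

lemma path_nocycle: "\<not> has_cycle {0..<n} (pathE n)"
proof
  assume "has_cycle {0..<n} (pathE n)"
  then obtain xs where xs: "length xs \<ge> 3" "distinct xs"
    "\<forall>i < length xs. {xs ! i, xs ! ((i + 1) mod length xs)} \<in> pathE n"
    by (auto simp: has_cycle_def)
  define m where "m = length xs"
  define M where "M = Max (set xs)"
  have "xs \<noteq> []" using xs by auto
  then have "M \<in> set xs" by (simp add: M_def)
  then obtain i where i: "i < m" "xs ! i = M" by (auto simp: in_set_conv_nth m_def)
  define j where "j = (i + 1) mod m"
  define l where "l = (if i = 0 then m - 1 else i - 1)"
  have m3: "m \<ge> 3" using xs by (simp add: m_def)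
  have jm: "j < m" using m3 by (simp add: j_def)
  have lm: "l < m" using i m3 by (auto simp: l_def)
  have l1: "(l + 1) mod m = i" using i m3 by (auto simp: l_def)
  have jl: "j \<noteq> l"
  proof (cases "i = 0")
    case True then show ?thesis using m3 by (simp add: j_def l_def)
  next
    case False
    show ?thesis
    proof (cases "i = m - 1")
      case True then show ?thesis using m3 False by (simp add: j_def l_def)
    next
      case F2: False
      then have "j = i + 1" using i by (simp add: j_def)
      then show ?thesis using False by (simp add: l_def)
    qed
  qed
  have "{xs ! i, xs ! j} \<in> pathE n" using xs(3) i(1) unfolding j_def m_def by simp
  then have e1: "{M, xs ! j} \<in> pathE n" using i(2) by simp
  have e2: "{xs ! l, M} \<in> pathE n" using xs(3) lm l1 i by (metis m_def)
  have b1: "xs ! j \<le> M" using jm by (simp add: M_def m_def)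
  have b2: "xs ! l \<le> M" using lm by (simp add: M_def m_def)
  have "Suc (xs ! j) = M" using path_edge[OF e1] b1 by auto
  moreover have "Suc (xs ! l) = M" using path_edge[OF e2] b2 by auto
  ultimately have "xs ! j = xs ! l" by simp
  then show False using xs(2) jm lm jl by (simp add: nth_eq_iff_index_eq m_def)
qed

lemma path_conn0: "u < n \<Longrightarrow> (adj (pathE n))\<^sup>*\<^sup>* 0 u \<and> (adj (pathE n))\<^sup>*\<^sup>* u 0"
proof (induction u)
  case 0 then show ?case by simp
next
  case (Suc u)
  have a1: "adj (pathE n) u (Suc u)" using Suc.prems by (auto simp: adj_def pathE_def)
  have a2: "adj (pathE n) (Suc u) u" using Suc.prems
    by (auto simp: adj_def pathE_def insert_commute)
  from Suc have "(adj (pathE n))\<^sup>*\<^sup>* 0 u \<and> (adj (pathE n))\<^sup>*\<^sup>* u 0" by simp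
  then show ?case using a1 a2
    by (meson converse_rtranclp_into_rtranclp rtranclp.rtrancl_into_rtrancl)
qed

lemma path_tree: "n \<ge> 1 \<Longrightarrow> is_tree {0..<n} (pathE n)"
  unfolding is_tree_def
proof (intro conjI)
  show "simple_graph {0..<n} (pathE n)" unfolding simple_graph_def pathE_def
  proof (intro conjI ballI)
    fix e assume "e \<in> {{i, Suc i} |i. Suc i < n}"
    then obtain i where "e = {i, Suc i}" "Suc i < n" by blast
    then show "\<exists>u v. u \<in> {0..<n} \<and> v \<in> {0..<n} \<and> u \<noteq> v \<and> e = {u, v}"
      by (intro exI[of _ i] exI[of _ "Suc i"]) simp
  qed simp
  assume "n \<ge> 1"
  show "connected_graph {0..<n} (pathE n)" unfolding connected_graph_def
  proof (intro conjI ballI)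
    show "{0..<n} \<noteq> {}" using \<open>n \<ge> 1\<close> by simp
    fix u v assume "u \<in> {0..<n}" "v \<in> {0..<n}"
    then have "(adj (pathE n))\<^sup>*\<^sup>* u 0" "(adj (pathE n))\<^sup>*\<^sup>* 0 v"
      using path_conn0 by auto
    then show "(adj (pathE n))\<^sup>*\<^sup>* u v" by (rule rtranclp_trans)
  qed
  show "\<not> has_cycle {0..<n} (pathE n)" by (rule path_nocycle)
qed

lemma upper:
  assumes "pathE n \<subseteq> E" "n \<ge> 3" "\<forall>e\<in>E. e \<subseteq> {0..<n}"
  shows "k_proper_coloring k {0..<n} E (\<lambda>e. Min e mod 2) \<and> card ((\<lambda>e. Min e mod 2) ` E) = 2"
proof
  have pr: "proper_edges (\<lambda>e. Min e mod 2) (pathE n)"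
    unfolding proper_edges_def
  proof (intro ballI impI)
    fix e f assume ef: "e \<in> pathE n" "f \<in> pathE n" "e \<noteq> f \<and> e \<inter> f \<noteq> {}"
    obtain i where i: "e = {i, Suc i}" using ef(1) by (auto simp: pathE_def)
    obtain j where j: "f = {j, Suc j}" using ef(2) by (auto simp: pathE_def)
    have "i \<noteq> j" using ef(3) i j by auto
    then have "j = Suc i \<or> i = Suc j" using ef(3) i j by auto
    then have "i mod 2 \<noteq> j mod 2" by (auto simp: mod_Suc split: if_splits)
    then show "Min e mod 2 \<noteq> Min f mod 2" using i j by simp
  qed
  have sg: "subgraph {0..<n} (pathE n) {0..<n} E"
    unfolding subgraph_def
  proof (intro conjI ballI)
    show "pathE n \<subseteq> E" by (rule assms(1))
    fix e assume "e \<in> pathE n"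
    then obtain i where "e = {i, Suc i}" "Suc i < n" by (auto simp: pathE_def)
    then show "e \<subseteq> {0..<n}" by simp
  qed simp
  have tr: "is_tree {0..<n} (pathE n)" using path_tree assms(2) by simp
  show "k_proper_coloring k {0..<n} E (\<lambda>e. Min e mod 2)"
    unfolding k_proper_coloring_def proper_S_tree_def
  proof (intro allI impI)
    fix S assume "S \<subseteq> {0..<n} \<and> card S = k"
    then have "S \<subseteq> {0..<n}" by simp
    then show "\<exists>H F. subgraph H F {0..<n} E \<and> is_tree H F \<and> S \<subseteq> H \<and> proper_edges (\<lambda>e. Min e mod 2) F"
      using sg pr tr by (intro exI[of _ "{0..<n}"] exI[of _ "pathE n"]) simp
  qed
  have p01: "Suc 0 < n" and p12: "Suc (Suc 0) < n" using assms(2) by simp_all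
  have "{0,1} \<in> pathE n" unfolding pathE_def using p01 by (intro CollectI exI[of _ 0]) simp
  moreover have "{1,2} \<in> pathE n" unfolding pathE_def using p12 by (intro CollectI exI[of _ 1]) (simp add: numeral_2_eq_2)
  ultimately have "{0,1} \<in> pathE n" "{1,2} \<in> pathE n" by simp_all
  then have "{0,1} \<in> E" "{1,2} \<in> E" using assms(1) by blast+
  have "(\<lambda>e. Min e mod 2) ` E = {0, 1}"
  proof (rule equalityI)
    show "(\<lambda>e. Min e mod 2) ` E \<subseteq> {0, 1}" by auto
    have "Min {0::nat,1} mod 2 = 0" "Min {1::nat,2} mod 2 = 1" by simp_all
    then have "0 \<in> (\<lambda>e. Min e mod 2) ` E" "1 \<in> (\<lambda>e. Min e mod 2) ` E"
      using \<open>{0,1} \<in> E\<close> \<open>{1,2} \<in> E\<close> by (metis image_eqI)+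
    then show "{0, 1} \<subseteq> (\<lambda>e. Min e mod 2) ` E" by simp
  qed
  then show "card ((\<lambda>e. Min e mod 2) ` E) = 2" by simp
qed

lemma px2:
  assumes "pathE n \<subseteq> E" "n \<ge> 3" "\<forall>e\<in>E. e \<subseteq> {0..<n}" "3 \<le> k" "k \<le> n"
  shows "px k {0..<n} E = 2"
proof -
  have fin: "finite E"
    by (rule finite_subset[of _ "Pow {0..<n}"]) (use assms(3) in auto)
  show ?thesis unfolding px_def
    apply (rule Least_equality)
    using upper[OF assms(1-3)] apply blast
    using lower fin assms(4,5) by blast
qed

theorem mainTheorem8:
  fixes n k :: nat
  assumes "n \<ge> 3" and "3 \<le> k" and "k \<le> n"
  shows "px k {0..<n} (complete_graph n) = 2
       \<and> px k {0..<n} (cycle_graph n) = 2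
       \<and> px k {0..<n} (wheel_graph n) = 2"
proof (intro conjI)
  show "px k {0..<n} (complete_graph n) = 2"
  proof (rule px2)
    show "pathE n \<subseteq> complete_graph n"
    proof
      fix e assume "e \<in> pathE n"
      then obtain i where "e = {i, Suc i}" "Suc i < n" by (auto simp: pathE_def)
      then show "e \<in> complete_graph n" unfolding complete_graph_def by force
    qed
  qed (use assms in \<open>auto simp: complete_graph_def\<close>)
  show "px k {0..<n} (cycle_graph n) = 2"
    by (rule px2) (use assms in \<open>auto simp: pathE_def cycle_graph_def\<close>)
  have sub: "pathE n \<subseteq> wheel_graph n"
  proof
    fix e assume "e \<in> pathE n"
    then obtain i where e: "e = {i, Suc i}" "Suc i < n" by (auto simp: pathE_def)
    show "e \<in> wheel_graph n"
    proof (cases "Suc i < n - 1")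
      case True
      then have "(i + 1) mod (n - 1) = Suc i" by simp
      then have "e \<in> cycle_graph (n - 1)" using True e
        by (auto simp: cycle_graph_def intro!: exI[of _ i])
      then show ?thesis by (simp add: wheel_graph_def)
    next
      case False
      then have "Suc i = n - 1" using e by simp
      then show ?thesis using e by (auto simp: wheel_graph_def)
    qed
  qed
  have md: "Suc i mod (n - Suc 0) < n" for i
  proof -
    have "Suc i mod (n - Suc 0) < n - Suc 0" using assms(1) by simp
    then show ?thesis by linarith
  qed
  have "\<forall>e\<in>wheel_graph n. e \<subseteq> {0..<n}"
    using assms(1) md by (auto simp: wheel_graph_def cycle_graph_def)
  then show "px k {0..<n} (wheel_graph n) = 2"
    using px2 sub assms by blast
qed

end
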